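(* Let $\theta>1$, $r\in(\theta^{-1},\theta^{-1/2}]$ and $s=\max\big(1,\frac{\ln\theta}{\ln(r\theta)}-2\big)$. Let $(P_1,\dots,P_n)$ be a random price sequence with values in $[1,\theta]$, $P^*=\max_iP_i$, and let $Y$ be a random prediction with values in $[1,\theta]$, with arbitrary joint distribution. Then \[ \frac{\mathbb{E}[\mathsf{A}^1_r(P,Y)]}{\mathbb{E}[P^*]}\ \ge\ \max\Big\{r,\ \frac{1}{r\theta}\,\frac{\mathbb{E}[P^*\,\mathcal{E}(P^*,Y)^{s}]}{\mathbb{E}[P^*]}\Big\}. \]
   Context: One-max search: fix $\theta>1$. Prices $p_1,\dots,p_n\in[1,\theta]$ are revealed one at a time; the algorithm receives at the start a prediction $y\in[1,\theta]$ of the maximum price. At each step it irrevocably accepts the current price (payoff = that price) or rejects it; if nothing is accepted the payoff is $1$. Let $\varphi_r(z)=\frac{r\theta-1}{1-r}+\frac{1-r^2\theta}{1-r}\cdot\frac{z}{r\theta}$ and $\Phi^1_r(z)=\max(r\theta,\varphi_r(z))$; $\mathsf{A}^1_r$ accepts the first price $p_i\ge\Phi^1_r(y)$, and $\mathsf{A}^1_r(P,Y)$ denotes its (random) payoff run on the realized prices and prediction. $\mathcal{E}(a,b)=\min\{a/b,b/a\}$. *)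

theory Defs
  imports "HOL-Probability.Probability"
begin

definition phi_r :: "real \<Rightarrow> real \<Rightarrow> real \<Rightarrow> real" where
  "phi_r \<theta> r z = (r * \<theta> - 1) / (1 - r) + (1 - r^2 * \<theta>) / (1 - r) * (z / (r * \<theta>))"

definition Phi1 :: "real \<Rightarrow> real \<Rightarrow> real \<Rightarrow> real" where
  "Phi1 \<theta> r z = max (r * \<theta>) (phi_r \<theta> r z)"

definition A1 :: "real \<Rightarrow> real \<Rightarrow> real list \<Rightarrow> real \<Rightarrow> real" where
  "A1 \<theta> r ps y = (case find (\<lambda>p. p \<ge> Phi1 \<theta> r y) ps of None \<Rightarrow> 1 | Some p \<Rightarrow> p)"

definition consist :: "real \<Rightarrow> real \<Rightarrow> real" where
  "consist a b = min (a / b) (b / a)"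

end

theory Submission
  imports Defs
begin

lemma conc_powr:
  fixes a b t l :: real
  assumes "0 \<le> l" "l \<le> 1" "0 < a" "0 < b" "0 \<le> t" "t \<le> 1"
  shows "(1-t) * a powr l + t * b powr l \<le> ((1-t)*a + t*b) powr l"
proof -
  define c where "c = (1-t)*a + t*b"
  have c0: "c > 0" unfolding c_def using assms
    by (smt (verit) mult_nonneg_nonneg mult_pos_pos)
  have ya: "a powr l * c powr (1-l) \<le> l*a + (1-l)*c"
    using Youngs_inequality_0[of l "1-l" a c] assms c0 by simp
  have yb: "b powr l * c powr (1-l) \<le> l*b + (1-l)*c"
    using Youngs_inequality_0[of l "1-l" b c] assms c0 by simp
  have "((1-t) * a powr l + t * b powr l) * c powr (1-l)
     = (1-t) * (a powr l * c powr (1-l)) + t * (b powr l * c powr (1-l))"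
    by (simp add: algebra_simps)
  also have "\<dots> \<le> (1-t) * (l*a + (1-l)*c) + t * (l*b + (1-l)*c)"
    using ya yb assms by (intro add_mono mult_left_mono) auto
  also have "\<dots> = c" unfolding c_def by (simp add: algebra_simps)
  also have "c = c powr l * c powr (1-l)" using c0 by (simp add: powr_add[symmetric])
  finally have "((1-t) * a powr l + t * b powr l) * c powr (1-l) \<le> c powr l * c powr (1-l)" .
  then show ?thesis unfolding c_def[symmetric] using c0
    by (simp add: mult_le_cancel_right)
qed

lemma key:
  fixes \<theta> r s y u :: real
  assumes "\<theta> > 1" "1 / \<theta> < r" "r \<le> 1 / sqrt \<theta>" "s \<ge> 1"
    and "s \<ge> ln \<theta> / ln (r * \<theta>) - 2"
    and "r * \<theta> \<le> y" "y \<le> \<theta>" "0 < u" "u \<le> phi_r \<theta> r y"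
  shows "u * (u / y) powr s \<le> r * \<theta>"
proof -
  define k where "k = r * \<theta>"
  have k1: "k > 1" using assms(1,2) unfolding k_def by (simp add: field_simps)
  have r0: "r > 0" using assms(1,2) by (smt (verit) divide_pos_pos)
  have sq: "sqrt \<theta> < \<theta>" using assms(1) by (smt (verit) real_sqrt_less_iff real_sqrt_gt_1_iff real_sqrt_mult_self mult_less_cancel_left1 real_sqrt_gt_zero)
  have r1: "r < 1"
  proof -
    have "1 / sqrt \<theta> < 1" using assms(1) by simp
    then show ?thesis using assms(3) by simp
  qed
  have kt: "k < \<theta>" unfolding k_def using r1 assms(1) by simp
  define t where "t = (y - k) / (\<theta> - k)"
  have t0: "0 \<le> t" "t \<le> 1" unfolding t_def using assms(6,7) kt k_def by (auto simp: field_simps)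
  have tt: "t * (\<theta> - k) = y - k" unfolding t_def using kt by simp
  have yt: "y = (1-t)*k + t*\<theta>" using tt by (simp add: algebra_simps)
  have phit: "phi_r \<theta> r y = (1-t)*k + t*(1/r)"
  proof -
    have "phi_r \<theta> r y = (r * \<theta> - 1) / (1 - r) + (1 - r^2 * \<theta>) / (1 - r) * (y / (r * \<theta>))"
      unfolding phi_r_def ..
    also have "\<dots> = ((r*\<theta> - 1) * (r*\<theta>) + (1 - r^2*\<theta>) * y) / ((1-r)*(r*\<theta>))"
      using r1 r0 assms(1) by (subst add_divide_distrib) simp
    also have "\<dots> = ((1-t)*k + t*(1/r))"
    proof -
      have "((1-t)*k + t*(1/r)) * ((1-r)*(r*\<theta>)) = (r*\<theta> - 1) * (r*\<theta>) + (1 - r^2*\<theta>) * y"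
        unfolding yt k_def using r0 by (simp add: algebra_simps power2_eq_square)
      then show ?thesis using r1 r0 assms(1) by (simp add: field_simps)
    qed
    finally show ?thesis .
  qed
  define l where "l = s / (1+s)"
  have l0: "0 \<le> l" "l \<le> 1" unfolding l_def using assms(4) by auto
  have lnk: "ln k > 0" using k1 by simp
  have s2: "(2+s) * ln k \<ge> ln \<theta>"
  proof -
    have "ln \<theta> / ln k \<le> s + 2" using assms(5) k_def by simp
    then show ?thesis using lnk by (simp add: field_simps)
  qed
  have endp: "k powr (1-l) * \<theta> powr l \<ge> 1/r"
  proof -
    have "ln (1/r) = ln \<theta> - ln k" unfolding k_def using r0 assms(1)
      by (simp add: ln_div ln_mult)
    also have "\<dots> \<le> (1-l) * ln k + l * ln \<theta>"
    proof -
      have "(1+s) * (ln \<theta> - ln k) \<le> (1+s) * ((1-l) * ln k + l * ln \<theta>)"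
      proof -
        have e1: "(1+s)*(1-l) = 1" "(1+s)*l = s" unfolding l_def using assms(4) by (auto simp: field_simps)
        have "(1+s) * ((1-l) * ln k + l * ln \<theta>) = ((1+s)*(1-l)) * ln k + ((1+s)*l) * ln \<theta>"
          by (simp add: algebra_simps)
        also have "\<dots> = ln k + s * ln \<theta>" using e1 by simp
        finally show ?thesis using s2 by (simp add: algebra_simps)
      qed
      then show ?thesis using assms(4) by simp
    qed
    also have "\<dots> = ln (k powr (1-l) * \<theta> powr l)"
      using k1 assms(1) by (simp add: ln_mult ln_powr)
    finally show ?thesis using r0 k1 assms(1)
      by (subst (asm) ln_le_cancel_iff) auto
  qed
  have "phi_r \<theta> r y \<le> k powr (1-l) * y powr l"
  proof -
    have "(1-t) * k powr l + t * \<theta> powr l \<le> y powr l"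
      using conc_powr[OF l0 _ _ t0, of k \<theta>] k1 assms(1) yt by simp
    then have "k powr (1-l) * ((1-t) * k powr l + t * \<theta> powr l) \<le> k powr (1-l) * y powr l"
      using k1 by (intro mult_left_mono) auto
    moreover have "k powr (1-l) * ((1-t) * k powr l + t * \<theta> powr l)
        = (1-t) * k + t * (k powr (1-l) * \<theta> powr l)"
      using k1 by (simp add: algebra_simps powr_add[symmetric])
    moreover have "(1-t)*k + t*(1/r) \<le> (1-t) * k + t * (k powr (1-l) * \<theta> powr l)"
      using mult_left_mono[OF endp t0(1)] by simp
    ultimately show ?thesis using phit by linarith
  qed
  then have uh: "u \<le> k powr (1-l) * y powr l" using assms(9) by linarith
  have y0: "y > 0" using assms(6) k1 k_def by simp
  have "u powr (1+s) \<le> (k powr (1-l) * y powr l) powr (1+s)"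
    using uh assms(8) assms(4) by (intro powr_mono2) auto
  also have "\<dots> = k * y powr s"
  proof -
    have e: "(s + s * s) / (1 + s) = s" "(1 - s/(1+s)) * (1+s) = 1" using assms(4) by (auto simp: field_simps)
    show ?thesis
      using k1 y0 assms(4) unfolding l_def
      by (simp add: powr_mult powr_powr e)
  qed
  finally have A: "u powr (1+s) \<le> k * y powr s" .
  have "u * (u / y) powr s = u powr (1+s) / y powr s"
    using assms(8) y0 by (simp add: powr_divide powr_add)
  also have "\<dots> \<le> k" using A y0 by (simp add: divide_le_eq)
  finally show ?thesis unfolding k_def .
qed

lemma phi_facts:
  fixes \<theta> r y :: real
  assumes "\<theta> > 1" "1 / \<theta> < r" "r \<le> 1 / sqrt \<theta>" "1 \<le> y" "y \<le> \<theta>"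
  shows "y / (r*\<theta>) \<le> phi_r \<theta> r y" "phi_r \<theta> r y \<le> 1 / r"
    "phi_r \<theta> r y > r * \<theta> \<Longrightarrow> r * \<theta> < y"
    "r * \<theta> \<le> y \<Longrightarrow> phi_r \<theta> r y \<le> y" "r * \<theta> \<le> 1 / r"
proof -
  have r0: "r > 0" using assms(1,2) by (smt (verit) divide_pos_pos)
  have r1: "r < 1"
  proof -
    have "1 / sqrt \<theta> < 1" using assms(1) by simp
    then show ?thesis using assms(3) by simp
  qed
  have k1: "r * \<theta> > 1" using assms(1,2) by (simp add: field_simps)
  have rr: "r^2 * \<theta> \<le> 1"
  proof -
    have "r * sqrt \<theta> \<le> 1" using assms(3) assms(1) by (simp add: field_simps)
    then have "(r * sqrt \<theta>)^2 \<le> 1" using r0 assms(1)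
      by (metis abs_le_square_iff abs_of_nonneg mult_nonneg_nonneg power_one real_sqrt_ge_zero less_imp_le order_less_le_trans zero_less_one)
    then show ?thesis using assms(1) by (simp add: power_mult_distrib)
  qed
  show "r * \<theta> \<le> 1 / r" using rr r0 by (simp add: field_simps power2_eq_square)
  define a where "a = (r * \<theta> - 1) / (1 - r)"
  define b where "b = (1 - r^2 * \<theta>) / (1 - r)"
  have a0: "a > 0" unfolding a_def using k1 r1 by simp
  have b0: "b \<ge> 0" unfolding b_def using rr r1 by simp
  have ph: "phi_r \<theta> r y = a + b * (y / (r*\<theta>))" unfolding phi_r_def a_def b_def by simp
  have ab: "a + b = r * \<theta>" unfolding a_def b_def using r1
    by (subst add_divide_distrib[symmetric]) (simp add: field_simps power2_eq_square)
  have ne: "r + r * (r * r) \<noteq> r * (r * 2)"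
  proof -
    have "r * (1-r)^2 > 0" using r0 r1 by simp
    then show ?thesis by (simp add: algebra_simps power2_eq_square)
  qed
  have ab2: "a + b / r = 1 / r" unfolding a_def b_def using r1 r0 ne
    by (simp add: field_simps power2_eq_square)
  have e1: "phi_r \<theta> r y - y / (r*\<theta>) = a * (1 - y / \<theta>)"
  proof -
    have "b - 1 = - r * a" unfolding a_def b_def using r1 r0
      by (simp add: field_simps power2_eq_square)
    then have bb: "b = 1 - r * a" by simp
    have "phi_r \<theta> r y - y / (r*\<theta>) = a + (b - 1) * (y / (r*\<theta>))" unfolding ph by (simp add: left_diff_distrib diff_divide_distrib)
    also have "\<dots> = a * (1 - y / \<theta>)" using r0 assms(1) by (simp add: bb field_simps)
    finally show ?thesis .
  qed
  show "y / (r*\<theta>) \<le> phi_r \<theta> r y" using e1 a0 assms(1,5) by (smt (verit) divide_le_eq_1 mult_nonneg_nonneg)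
  have "phi_r \<theta> r y \<le> a + b * (\<theta> / (r*\<theta>))" unfolding ph using b0 assms(5) k1
    by (intro add_left_mono mult_left_mono divide_right_mono) auto
  also have "\<dots> = 1 / r" using ab2 assms(1) by simp
  finally show "phi_r \<theta> r y \<le> 1 / r" .
  show "phi_r \<theta> r y > r * \<theta> \<Longrightarrow> r * \<theta> < y"
  proof (rule ccontr)
    assume "phi_r \<theta> r y > r * \<theta>" "\<not> r * \<theta> < y"
    then have "y / (r*\<theta>) \<le> 1" using k1 by simp
    then have "phi_r \<theta> r y \<le> a + b" unfolding ph using b0 by (smt (verit) mult_left_le)
    then show False using ab \<open>phi_r \<theta> r y > r * \<theta>\<close> by simp
  qed
  show "r * \<theta> \<le> y \<Longrightarrow> phi_r \<theta> r y \<le> y"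
  proof -
    assume ky: "r * \<theta> \<le> y"
    have bb: "b = r * \<theta> - a" using ab by (simp add: algebra_simps)
    have "phi_r \<theta> r y - y = a - a * (y / (r*\<theta>))" unfolding ph bb
    proof -
      have "\<theta> * r \<noteq> 0" using r0 assms(1) by simp
      then show "a + (r * \<theta> - a) * (y / (r * \<theta>)) - y = a - a * (y / (r * \<theta>))" by (simp add: field_simps)
    qed
    moreover have "y / (r*\<theta>) \<ge> 1" using ky k1 by simp
    ultimately show ?thesis using a0 by (smt (verit) mult_le_cancel_left1)
  qed
qed


lemma consist1: "0 < y \<Longrightarrow> y \<le> m \<Longrightarrow> consist m y = y / m"
proof -
  assume a: "0 < y" "y \<le> m"
  then have "y / m \<le> 1" "1 \<le> m / y" by auto
  then show ?thesis unfolding consist_def by (simp add: min_def)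
qed

lemma consist2: "0 < m \<Longrightarrow> m \<le> y \<Longrightarrow> consist m y = m / y"
proof -
  assume a: "0 < m" "m \<le> y"
  then have "m / y \<le> 1" "1 \<le> y / m" by auto
  then show ?thesis unfolding consist_def by (simp add: min_def)
qed

lemma pointwise:
  fixes \<theta> r s y :: real and ps :: "real list"
  assumes "\<theta> > 1" "1 / \<theta> < r" "r \<le> 1 / sqrt \<theta>" "s \<ge> 1"
    and "s \<ge> ln \<theta> / ln (r * \<theta>) - 2"
    and "ps \<noteq> []" "\<And>p. p \<in> set ps \<Longrightarrow> 1 \<le> p \<and> p \<le> \<theta>" "1 \<le> y" "y \<le> \<theta>"
  shows "r * Max (set ps) \<le> A1 \<theta> r ps y"
    "1 / (r * \<theta>) * (Max (set ps) * consist (Max (set ps)) y powr s) \<le> A1 \<theta> r ps y"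
proof -
  define m where "m = Max (set ps)"
  define T where "T = Phi1 \<theta> r y"
  have r0: "r > 0" using assms(1,2) by (smt (verit) divide_pos_pos)
  have k1: "r * \<theta> > 1" using assms(1,2) by (simp add: field_simps)
  have min: "m \<in> set ps" unfolding m_def using assms(6) by simp
  have m1: "1 \<le> m" "m \<le> \<theta>" using assms(7)[OF min] by auto
  have mge: "\<And>p. p \<in> set ps \<Longrightarrow> p \<le> m" unfolding m_def by simp
  note pf = phi_facts[OF assms(1,2,3,8,9)]
  have T1: "r * \<theta> \<le> T" "phi_r \<theta> r y \<le> T" "T \<le> 1 / r" unfolding T_def Phi1_def
    using pf(2) pf(5) by auto
  have c0: "0 < consist m y" "consist m y \<le> 1" unfolding consist_def using m1 assms(8)
    by (simp, cases "m \<le> y") (simp_all add: min_le_iff_disj divide_le_eq_1)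
  have cs: "consist m y powr s \<le> 1" using c0 assms(4) by (intro powr_le1) auto
  have mle: "m * consist m y powr s \<le> m" using mult_left_mono[OF cs, of m] m1 by simp
  have mcs: "m * consist m y powr s \<le> y"
  proof (cases "y \<le> m")
    case True
    then have ce: "consist m y = y / m" using consist1 assms(8) by simp
    have "(y/m) powr s \<le> y/m" using True m1 assms(4,8) by (intro powr_le_one_le) auto
    then have "m * (y/m) powr s \<le> m * (y/m)" using m1 by (intro mult_left_mono) auto
    then show ?thesis unfolding ce using m1 by simp
  next
    case False
    then show ?thesis using mle by linarith
  qed
  have A: "A1 \<theta> r ps y \<ge> r * m \<and> A1 \<theta> r ps y \<ge> 1 / (r * \<theta>) * (m * consist m y powr s)"
  proof (cases "find (\<lambda>p. p \<ge> T) ps")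
    case None
    then have "\<forall>p\<in>set ps. p < T" by (auto simp: find_None_iff)
    then have mT: "m < T" using min by auto
    have a1: "A1 \<theta> r ps y = 1" unfolding A1_def using None T_def by simp
    have "r * m \<le> r * (1/r)" using mT T1 r0 by (intro mult_left_mono) auto
    then have "r * m \<le> 1" using r0 by simp
    moreover have "m * consist m y powr s \<le> r * \<theta>"
    proof (cases "m \<le> r * \<theta>")
      case True
      then show ?thesis using mle by linarith
    next
      case False
      then have Tp: "T = phi_r \<theta> r y" "phi_r \<theta> r y > r * \<theta>" using mT unfolding T_def Phi1_def by auto
      then have yk: "r * \<theta> < y" using pf(3) by simp
      have my: "m \<le> y" using pf(4) yk mT Tp by simp
      then have "consist m y = m / y" using consist2 m1 by simp
      moreover have "m * (m / y) powr s \<le> r * \<theta>"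
        using key[OF assms(1-5) _ assms(9), of m] yk m1 mT Tp by simp
      ultimately show ?thesis by simp
    qed
    then have "1 / (r * \<theta>) * (m * consist m y powr s) \<le> 1" using k1 by (simp add: field_simps)
    ultimately show ?thesis using a1 by simp
  next
    case (Some p)
    then have p: "p \<in> set ps" "T \<le> p" by (auto simp: find_Some_iff nth_mem)
    have a1: "A1 \<theta> r ps y = p" unfolding A1_def using Some T_def by simp
    have "r * m \<le> r * \<theta>" using m1 r0 by simp
    moreover have "1 / (r * \<theta>) * (m * consist m y powr s) \<le> y / (r * \<theta>)"
      using divide_right_mono[OF mcs, of "r*\<theta>"] k1 by simp
    ultimately show ?thesis using a1 p T1 pf(1) by linarith
  qed
  then show "r * Max (set ps) \<le> A1 \<theta> r ps y"
    "1 / (r * \<theta>) * (Max (set ps) * consist (Max (set ps)) y powr s) \<le> A1 \<theta> r ps y"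
    unfolding m_def by auto
qed


lemma meas_find:
  fixes M :: "'w measure" and P :: "'w \<Rightarrow> nat \<Rightarrow> real" and T :: "'w \<Rightarrow> real"
  assumes "\<And>i. i \<in> set xs \<Longrightarrow> (\<lambda>\<omega>. P \<omega> i) \<in> borel_measurable M"
    and "T \<in> borel_measurable M"
  shows "(\<lambda>\<omega>. case find (\<lambda>p. p \<ge> T \<omega>) (map (P \<omega>) xs) of None \<Rightarrow> 1 | Some p \<Rightarrow> p) \<in> borel_measurable M"
  using assms(1)
proof (induction xs)
  case Nil
  then show ?case by simp
next
  case (Cons i xs)
  have m1: "(\<lambda>\<omega>. P \<omega> i) \<in> borel_measurable M" using Cons.prems by simp
  have m2: "(\<lambda>\<omega>. case find (\<lambda>p. p \<ge> T \<omega>) (map (P \<omega>) xs) of None \<Rightarrow> 1 | Some p \<Rightarrow> p) \<in> borel_measurable M"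
    using Cons by simp
  have st: "{\<omega> \<in> space M. T \<omega> \<le> P \<omega> i} \<in> sets M" using m1 assms(2) by measurable
  have "(\<lambda>\<omega>. if T \<omega> \<le> P \<omega> i then P \<omega> i else (case find (\<lambda>p. p \<ge> T \<omega>) (map (P \<omega>) xs) of None \<Rightarrow> 1 | Some p \<Rightarrow> p)) \<in> borel_measurable M"
    by (rule measurable_If[OF m1 m2 st])
  moreover have "(\<lambda>\<omega>. case find (\<lambda>p. p \<ge> T \<omega>) (map (P \<omega>) (i # xs)) of None \<Rightarrow> 1 | Some p \<Rightarrow> p)
     = (\<lambda>\<omega>. if T \<omega> \<le> P \<omega> i then P \<omega> i else (case find (\<lambda>p. p \<ge> T \<omega>) (map (P \<omega>) xs) of None \<Rightarrow> 1 | Some p \<Rightarrow> p))"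
    by (rule ext) auto
  ultimately show ?case by simp
qed

lemma A1_range: "A1 \<theta> r ps y = 1 \<or> A1 \<theta> r ps y \<in> set ps"
  unfolding A1_def by (auto split: option.split simp: find_Some_iff)

theorem lemma1:
  fixes M :: "'w measure" and P :: "'w \<Rightarrow> nat \<Rightarrow> real" and Y :: "'w \<Rightarrow> real"
    and \<theta> r s :: real and n :: nat
  assumes "prob_space M"
    and "\<theta> > 1" and "1 / \<theta> < r" and "r \<le> 1 / sqrt \<theta>"
    and "s = max 1 (ln \<theta> / ln (r * \<theta>) - 2)"
    and "n \<ge> 1"
    and "\<And>i. i < n \<Longrightarrow> (\<lambda>\<omega>. P \<omega> i) \<in> borel_measurable M"
    and "\<And>i \<omega>. i < n \<Longrightarrow> \<omega> \<in> space M \<Longrightarrow> P \<omega> i \<in> {1..\<theta>}"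
    and "Y \<in> borel_measurable M"
    and "\<And>\<omega>. \<omega> \<in> space M \<Longrightarrow> Y \<omega> \<in> {1..\<theta>}"
  shows "(\<integral>\<omega>. A1 \<theta> r (map (P \<omega>) [0..<n]) (Y \<omega>) \<partial>M) / (\<integral>\<omega>. Max (P \<omega> ` {..<n}) \<partial>M)
         \<ge> max r (1 / (r * \<theta>) *
              ((\<integral>\<omega>. Max (P \<omega> ` {..<n}) * consist (Max (P \<omega> ` {..<n})) (Y \<omega>) powr s \<partial>M)
               / (\<integral>\<omega>. Max (P \<omega> ` {..<n}) \<partial>M)))"
proof -
  interpret prob_space M by (rule assms(1))
  define A where "A \<omega> = A1 \<theta> r (map (P \<omega>) [0..<n]) (Y \<omega>)" for \<omega>
  define X where "X \<omega> = Max (P \<omega> ` {..<n})" for \<omega>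
  define C where "C \<omega> = X \<omega> * consist (X \<omega>) (Y \<omega>) powr s" for \<omega>
  have r0: "r > 0" using assms(2,3) by (smt (verit) divide_pos_pos)
  have k1: "r * \<theta> > 1" using assms(2,3) by (simp add: field_simps)
  have s1: "s \<ge> 1" "s \<ge> ln \<theta> / ln (r * \<theta>) - 2" using assms(5) by auto
  have setm: "set (map (P \<omega>) [0..<n]) = P \<omega> ` {..<n}" for \<omega>
    by (auto simp: lessThan_atLeast0)
  have pw: "r * X \<omega> \<le> A \<omega> \<and> 1 / (r * \<theta>) * C \<omega> \<le> A \<omega>" if w: "\<omega> \<in> space M" for \<omega>
  proof -
    have ne: "map (P \<omega>) [0..<n] \<noteq> []" using assms(6) by simp
    have pr: "\<And>p. p \<in> set (map (P \<omega>) [0..<n]) \<Longrightarrow> 1 \<le> p \<and> p \<le> \<theta>"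
      using assms(8)[OF _ w] by auto
    note pt = pointwise[OF assms(2,3,4) s1 ne pr, of "Y \<omega>"]
    show ?thesis using pt assms(10)[OF w] unfolding A_def X_def C_def setm by auto
  qed
  have Xb: "1 \<le> X \<omega> \<and> X \<omega> \<le> \<theta>" if w: "\<omega> \<in> space M" for \<omega>
  proof -
    have "0 \<in> {..<n}" using assms(6) by simp
    then have "X \<omega> \<in> P \<omega> ` {..<n}" unfolding X_def by (intro Max_in) auto
    then show ?thesis using assms(8)[OF _ w] by auto
  qed
  have Ab: "0 \<le> A \<omega> \<and> A \<omega> \<le> \<theta>" if w: "\<omega> \<in> space M" for \<omega>
  proof -
    have "A \<omega> = 1 \<or> A \<omega> \<in> set (map (P \<omega>) [0..<n])" unfolding A_def by (rule A1_range)
    moreover have "\<forall>p \<in> set (map (P \<omega>) [0..<n]). 1 \<le> p \<and> p \<le> \<theta>" using assms(8)[OF _ w] by auto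
    ultimately show ?thesis using assms(2) by (smt (verit))
  qed
  have Cb: "0 \<le> C \<omega> \<and> C \<omega> \<le> \<theta>" if w: "\<omega> \<in> space M" for \<omega>
  proof -
    have c0: "0 < consist (X \<omega>) (Y \<omega>)" "consist (X \<omega>) (Y \<omega>) \<le> 1"
      unfolding consist_def using Xb[OF w] assms(10)[OF w]
      by (simp, cases "X \<omega> \<le> Y \<omega>") (simp_all add: min_le_iff_disj divide_le_eq_1)
    have cs: "consist (X \<omega>) (Y \<omega>) powr s \<le> 1" using c0 s1 by (intro powr_le1) auto
    have "C \<omega> \<le> X \<omega>" unfolding C_def using mult_left_mono[OF cs, of "X \<omega>"] Xb[OF w] by simp
    moreover have "0 \<le> C \<omega>" unfolding C_def using Xb[OF w] by simp
    ultimately show ?thesis using Xb[OF w] by linarith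
  qed
  have Xm: "X \<in> borel_measurable M" unfolding X_def
    using assms(7) by (intro borel_measurable_Max) auto
  have Tm: "(\<lambda>\<omega>. Phi1 \<theta> r (Y \<omega>)) \<in> borel_measurable M"
    unfolding Phi1_def phi_r_def using assms(9) by measurable
  have Am: "A \<in> borel_measurable M"
  proof -
    have "(\<lambda>\<omega>. case find (\<lambda>p. p \<ge> Phi1 \<theta> r (Y \<omega>)) (map (P \<omega>) [0..<n]) of None \<Rightarrow> 1 | Some p \<Rightarrow> p) \<in> borel_measurable M"
      using assms(7) by (intro meas_find Tm) auto
    then show ?thesis unfolding A_def A1_def .
  qed
  have Cm: "C \<in> borel_measurable M" unfolding C_def consist_def using Xm assms(9) by measurable
  have Ai: "integrable M A" using Ab Am by (intro integrable_const_bound[of _ \<theta>] AE_I2) (auto simp: abs_le_iff dest: order.trans[OF zero_le_one])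
  have Xi: "integrable M X"
  proof (intro integrable_const_bound[of _ \<theta>] AE_I2 Xm)
    fix \<omega> assume "\<omega> \<in> space M"
    then show "norm (X \<omega>) \<le> \<theta>" using Xb[of \<omega>] by simp
  qed
  have Ci: "integrable M C" using Cb Cm by (intro integrable_const_bound[of _ \<theta>] AE_I2) (auto simp: abs_le_iff dest: order.trans[OF zero_le_one])
  have IX: "(\<integral>\<omega>. X \<omega> \<partial>M) \<ge> 1"
  proof -
    have "(\<integral>\<omega>. 1 \<partial>M) \<le> (\<integral>\<omega>. X \<omega> \<partial>M)" using Xb Xi by (intro integral_mono) auto
    then show ?thesis by (simp add: prob_space)
  qed
  have I1: "r * (\<integral>\<omega>. X \<omega> \<partial>M) \<le> (\<integral>\<omega>. A \<omega> \<partial>M)"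
  proof -
    have "(\<integral>\<omega>. r * X \<omega> \<partial>M) \<le> (\<integral>\<omega>. A \<omega> \<partial>M)" using pw Xi Ai by (intro integral_mono) auto
    then show ?thesis by simp
  qed
  have I2: "1 / (r * \<theta>) * (\<integral>\<omega>. C \<omega> \<partial>M) \<le> (\<integral>\<omega>. A \<omega> \<partial>M)"
  proof -
    have "(\<integral>\<omega>. 1 / (r * \<theta>) * C \<omega> \<partial>M) \<le> (\<integral>\<omega>. A \<omega> \<partial>M)" using pw Ci Ai by (intro integral_mono) auto
    then show ?thesis by simp
  qed
  have G1: "r \<le> (\<integral>\<omega>. A \<omega> \<partial>M) / (\<integral>\<omega>. X \<omega> \<partial>M)"
    using I1 IX by (simp add: pos_le_divide_eq)
  have G2: "1 / (r * \<theta>) * ((\<integral>\<omega>. C \<omega> \<partial>M) / (\<integral>\<omega>. X \<omega> \<partial>M)) \<le> (\<integral>\<omega>. A \<omega> \<partial>M) / (\<integral>\<omega>. X \<omega> \<partial>M)"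
  proof -
    have "1 / (r * \<theta>) * ((\<integral>\<omega>. C \<omega> \<partial>M) / (\<integral>\<omega>. X \<omega> \<partial>M)) = (1 / (r * \<theta>) * (\<integral>\<omega>. C \<omega> \<partial>M)) / (\<integral>\<omega>. X \<omega> \<partial>M)"
      by simp
    also have "\<dots> \<le> (\<integral>\<omega>. A \<omega> \<partial>M) / (\<integral>\<omega>. X \<omega> \<partial>M)" using I2 IX by (intro divide_right_mono) auto
    finally show ?thesis .
  qed
  show ?thesis using G1 G2 unfolding A_def C_def X_def by simp
qed

end
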